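(* Let $d \ge 2$, $\mu \in \mathbb{S}^{d-1}$, $\kappa \ge 0$, let $X$ follow the Power Spherical distribution with direction $\mu$ and concentration $\kappa$, and let $T=\mu^\top X$. Set $\alpha = \frac{d-1}{2}+\kappa$, $\beta=\frac{d-1}{2}$. Then the cumulative distribution function of $T$ is $F(t;\kappa,d) = I_{\frac{t+1}{2}}(\alpha,\beta)$ for $t\in[-1,1]$, and its inverse is $F^{-1}(y;\kappa,d) = 2\, I^{-1}_y(\alpha,\beta) - 1$ for $y \in [0,1]$, where $I^{-1}_y(\alpha,\beta)$ denotes the inverse of $x \mapsto I_x(\alpha,\beta)$ evaluated at $y$.
   Context: The Power Spherical distribution with direction $\mu\in\mathbb{S}^{d-1}$ and concentration $\kappa\ge 0$ is the probability distribution on $\mathbb{S}^{d-1}=\{x\in\mathbb{R}^d:\|x\|_2=1\}$ with density (w.r.t. surface measure) proportional to $(1+\mu^\top x)^\kappa$. $I_x(a,b) = B_x(a,b)/B(a,b)$ is the regularized incomplete Beta function, with $B_x(a,b)=\int_0^x u^{a-1}(1-u)^{b-1}\,du$ and $B(a,b)=\Gamma(a)\Gamma(b)/\Gamma(a+b)$. *)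

theory Defs
  imports "HOL-Analysis.Analysis"
begin

text \<open>Surface (Hausdorff) measure on the unit sphere of a Euclidean space, defined as
  the cone measure: sigma(A) = d * lambda({r x | 0 < r <= 1, x in A}), i.e. d times the
  push-forward of Lebesgue measure on the punctured unit ball under x |-> x/|x|.\<close>
definition sphere_surface_measure :: "'a::euclidean_space measure" where
  "sphere_surface_measure =
     density (distr (restrict_space lborel (ball 0 1 - {0}))
                    (restrict_space borel (sphere 0 1))
                    (\<lambda>x. x /\<^sub>R norm x))
             (\<lambda>_. ennreal (real DIM('a)))"

text \<open>Unnormalised Power Spherical density (1 + mu^T x)^kappa, with 0^0 = 1.\<close>
definition ps_unnorm :: "'a::euclidean_space \<Rightarrow> real \<Rightarrow> 'a \<Rightarrow> real" where
  "ps_unnorm \<mu> \<kappa> x = (if \<kappa> = 0 then 1 else (1 + \<mu> \<bullet> x) powr \<kappa>)"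

definition power_spherical :: "'a::euclidean_space \<Rightarrow> real \<Rightarrow> 'a measure" where
  "power_spherical \<mu> \<kappa> =
     density sphere_surface_measure
       (\<lambda>x. ennreal (ps_unnorm \<mu> \<kappa> x /
                      integral\<^sup>L sphere_surface_measure (ps_unnorm \<mu> \<kappa>)))"

definition inc_beta :: "real \<Rightarrow> real \<Rightarrow> real \<Rightarrow> real" where
  "inc_beta x a b = (LBINT u=0..x. u powr (a - 1) * (1 - u) powr (b - 1)) / Beta a b"

definition inc_beta_inv :: "real \<Rightarrow> real \<Rightarrow> real \<Rightarrow> real" where
  "inc_beta_inv y a b = (THE x. x \<in> {0..1} \<and> inc_beta x a b = y)"

end

theory Submission
  imports Defs
begin

typedef ('a::finite) idx = "{..<CARD('a)}" morphisms idx_rep idx_abs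
  by (rule exI[of _ 0]) simp

instance idx :: (finite) finite
proof
  have "(UNIV :: 'a idx set) = idx_abs ` {..<CARD('a)}"
    by (rule type_definition.Abs_image[OF type_definition_idx, symmetric])
  then show "finite (UNIV :: 'a idx set)" by (metis finite_imageI finite_lessThan)
qed

instantiation idx :: (finite) linorder
begin
definition less_eq_idx :: "'a idx \<Rightarrow> 'a idx \<Rightarrow> bool" where "less_eq_idx x y = (idx_rep x \<le> idx_rep y)"
definition less_idx :: "'a idx \<Rightarrow> 'a idx \<Rightarrow> bool" where "less_idx x y = (idx_rep x < idx_rep y)"
instance by standard (auto simp: less_eq_idx_def less_idx_def idx_rep_inject)
end

instance idx :: (finite) wellorder
proof
  fix P :: "'a idx \<Rightarrow> bool" and a
  assume H: "\<And>x. (\<And>y. y < x \<Longrightarrow> P y) \<Longrightarrow> P x"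
  have "\<forall>x. idx_rep x = n \<longrightarrow> P x" for n
  proof (induction n rule: less_induct)
    case (less n)
    show ?case using H less by (auto simp: less_idx_def)
  qed
  then show "P a" by blast
qed

lemma card_idx: "CARD('a::finite idx) = CARD('a)"
  using type_definition.card[OF type_definition_idx] by simp

lemma prod_Basis_vec: "(\<Prod>b\<in>(Basis :: (real^'n) set). f b) = (\<Prod>i\<in>UNIV. f (axis i 1))"
proof -
  have B: "(Basis :: (real^'n) set) = (\<lambda>i. axis i 1) ` UNIV"
    by (auto simp: Basis_vec_def)
  have I: "inj (\<lambda>i::'n. axis i (1::real))"
    by (auto intro!: injI simp: axis_eq_axis)
  show ?thesis unfolding B prod.reindex[OF I] by simp
qed

lemma lborel_perm:
  fixes \<pi> :: "'m::finite \<Rightarrow> 'n::finite"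
  assumes bij: "bij \<pi>"
  shows "distr lborel borel (\<lambda>x::real^'n. (\<chi> j. x $ \<pi> j) :: real^'m) = lborel"
proof (rule lborel_eqI[symmetric])
  let ?P = "\<lambda>x::real^'n. (\<chi> j. x $ \<pi> j) :: real^'m"
  let ?Q = "\<lambda>z::real^'m. (\<chi> i. z $ inv \<pi> i) :: real^'n"
  have [measurable]: "?P \<in> borel_measurable borel"
    by (intro borel_measurable_continuous_onI continuous_intros) 
  fix l u :: "real^'m"
  assume le: "\<And>b. b \<in> Basis \<Longrightarrow> l \<bullet> b \<le> u \<bullet> b"
  have le': "l $ j \<le> u $ j" for j using le[of "axis j 1"] by (simp add: cart_eq_inner_axis)
  have pre: "?P -` box l u = box (?Q l) (?Q u)"
    using bij by (auto simp: mem_box_cart bij_inv_eq_iff) (metis bij bij_inv_eq_iff)+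
  have "emeasure (distr lborel borel ?P) (box l u) = emeasure lborel (box (?Q l) (?Q u))"
    by (simp add: emeasure_distr pre)
  also have "\<dots> = (\<Prod>b\<in>Basis. (?Q u - ?Q l) \<bullet> b)"
    using le' by (intro emeasure_lborel_box) (auto simp: cart_eq_inner_axis[symmetric] Basis_vec_def)
  also have "\<dots> = (\<Prod>i\<in>UNIV. (u $ inv \<pi> i - l $ inv \<pi> i))"
    unfolding prod_Basis_vec by (simp add: cart_eq_inner_axis[symmetric])
  also have "(\<Prod>i\<in>UNIV. (u $ inv \<pi> i - l $ inv \<pi> i)) = (\<Prod>j\<in>UNIV. (u $ j - l $ j))"
    using prod.reindex_bij_betw[OF bij_betw_inv_into[OF bij], of "\<lambda>j. u $ j - l $ j"]
    by (simp add: bij_betw_def)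
  finally show "emeasure (distr lborel borel ?P) (box l u) = (\<Prod>b\<in>Basis. (u - l) \<bullet> b)"
    by (simp add: prod_Basis_vec cart_eq_inner_axis[symmetric])
qed simp

lemma lborel_orth_wo:
  fixes Q :: "real^'m::{finite,wellorder} \<Rightarrow> real^'m::_"
  assumes Q: "orthogonal_transformation Q"
  shows "distr lborel borel Q = lborel"
proof (rule lborel_eqI[symmetric])
  have linQ: "linear Q" using Q by (simp add: orthogonal_transformation_linear)
  have [measurable]: "Q \<in> borel_measurable borel"
    by (intro borel_measurable_continuous_onI linear_continuous_on linear_conv_bounded_linear[THEN iffD1] linQ)
  obtain Q' where Q': "orthogonal_transformation Q'" "Q' \<circ> Q = id" "Q \<circ> Q' = id"
    using orthogonal_transformation_inv Q by (metis orthogonal_transformation_bij bij_is_inj bij_is_surj inv_o_cancel surj_iff)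
  fix l u :: "real^'m::{finite,wellorder}"
  assume le: "\<And>b. b \<in> Basis \<Longrightarrow> l \<bullet> b \<le> u \<bullet> b"
  have pre: "Q -` box l u = Q' ` box l u"
    using Q' by (auto simp: fun_eq_iff) (metis image_eqI)
  have op: "open (Q -` box l u)"
    by (intro continuous_open_vimage open_box linear_continuous_at linear_conv_bounded_linear[THEN iffD1] linQ)
  have bnd: "bounded (Q' ` box l u)"
    using Q' by (intro bounded_linear_image bounded_box linear_conv_bounded_linear[THEN iffD1] orthogonal_transformation_linear)
  have lm: "box l u \<in> lmeasurable" by simp
  have "emeasure (distr lborel borel Q) (box l u) = emeasure lborel (Q' ` box l u)"
    by (simp add: emeasure_distr pre)
  also have "\<dots> = emeasure lebesgue (Q' ` box l u)"
    using op pre by (simp add: emeasure_completion borel_open)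
  also have "\<dots> = ennreal (measure lebesgue (Q' ` box l u))"
    using measurable_orthogonal_image[OF Q'(1) lm] by (simp add: emeasure_eq_measure2)
  also have "\<dots> = ennreal (measure lebesgue (box l u))"
    using measure_orthogonal_image[OF Q'(1) lm] by simp
  also have "\<dots> = emeasure lborel (box l u)"
    using lm by (simp add: emeasure_eq_measure2 emeasure_completion)
  finally show "emeasure (distr lborel borel Q) (box l u) = (\<Prod>b\<in>Basis. (u - l) \<bullet> b)"
    using le by simp
qed simp

lemma inner_perm:
  fixes \<pi> :: "'m::finite \<Rightarrow> 'n::finite"
  assumes bij: "bij \<pi>"
  shows "((\<chi> j. x $ \<pi> j) :: real^'m) \<bullet> (\<chi> j. y $ \<pi> j) = x \<bullet> y"
  unfolding inner_vec_def
  using sum.reindex_bij_betw[OF bij, of "\<lambda>i. x $ i \<bullet> y $ i"] by simp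

lemma lborel_orth:
  fixes Q :: "real^'n \<Rightarrow> real^'n"
  assumes Q: "orthogonal_transformation Q"
  shows "distr lborel borel Q = lborel"
proof -
  obtain \<pi> :: "'n idx \<Rightarrow> 'n" where bij: "bij \<pi>"
    using finite_same_card_bij[of "UNIV :: 'n idx set" "UNIV :: 'n set"] card_idx by auto
  define P where "P = (\<lambda>x::real^'n. (\<chi> j. x $ \<pi> j) :: real^'n idx)"
  define P' where "P' = (\<lambda>z::real^'n idx. (\<chi> i. z $ inv \<pi> i) :: real^'n)"
  have bij': "bij (inv \<pi>)" using bij by (simp add: bij_imp_bij_inv)
  have PP': "P' (P x) = x" for x
    using bij by (simp add: P_def P'_def vec_eq_iff bij_is_surj surj_f_inv_f)
  have [measurable]: "P \<in> borel_measurable borel" unfolding P_def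
    by (intro borel_measurable_continuous_onI continuous_intros)
  have [measurable]: "P' \<in> borel_measurable borel" unfolding P'_def
    by (intro borel_measurable_continuous_onI continuous_intros)
  have linQ: "linear Q" using Q by (simp add: orthogonal_transformation_linear)
  have [measurable]: "Q \<in> borel_measurable borel"
    by (intro borel_measurable_continuous_onI linear_continuous_on linear_conv_bounded_linear[THEN iffD1] linQ)
  define Q' where "Q' = P \<circ> Q \<circ> P'"
  have "orthogonal_transformation Q'"
    unfolding orthogonal_transformation_def
  proof (intro conjI allI)
    show "linear Q'" unfolding Q'_def P_def P'_def
      by (intro linear_compose linQ) (auto intro!: linearI simp: vec_eq_iff)
    fix v w
    show "Q' v \<bullet> Q' w = v \<bullet> w"
      unfolding Q'_def comp_def P_def P'_def
      using inner_perm[OF bij] inner_perm[OF bij'] Q by (simp add: orthogonal_transformation_def)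
  qed
  then have D: "distr lborel borel Q' = lborel" by (rule lborel_orth_wo)
  have [measurable]: "Q' \<in> borel_measurable borel" unfolding Q'_def by measurable
  have QQ: "Q = P' \<circ> Q' \<circ> P" unfolding Q'_def by (simp add: fun_eq_iff PP')
  have "distr lborel borel Q = distr (distr (distr lborel borel P) borel Q') borel P'"
    by (simp add: distr_distr QQ comp_assoc)
  also have "\<dots> = lborel"
    unfolding P_def lborel_perm[OF bij] D[unfolded] unfolding P'_def
    using D lborel_perm[OF bij'] by simp
  finally show ?thesis .
qed

lemma inner_sum_Basis:
  fixes f :: "'a::euclidean_space \<Rightarrow> real"
  assumes "c \<in> Basis"
  shows "(\<Sum>b\<in>Basis. f b *\<^sub>R b) \<bullet> c = f c"
  using assms by (simp add: inner_sum_left inner_Basis if_distrib sum.delta cong: if_cong)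

lemma norm_sum_Basis:
  fixes f :: "'a::euclidean_space \<Rightarrow> real"
  shows "norm (\<Sum>b\<in>Basis. f b *\<^sub>R b) ^ 2 = (\<Sum>b\<in>Basis. (f b)^2)"
proof -
  have "norm (\<Sum>b\<in>Basis. f b *\<^sub>R b) ^ 2 = (\<Sum>b\<in>Basis. f b *\<^sub>R b) \<bullet> (\<Sum>b\<in>Basis. f b *\<^sub>R b)"
    by (simp add: power2_norm_eq_inner)
  also have "\<dots> = (\<Sum>c\<in>Basis. ((\<Sum>b\<in>Basis. f b *\<^sub>R b) \<bullet> c) * ((\<Sum>b\<in>Basis. f b *\<^sub>R b) \<bullet> c))"
    by (rule euclidean_inner)
  also have "\<dots> = (\<Sum>b\<in>Basis. (f b)^2)"
    by (intro sum.cong refl) (simp add: inner_sum_Basis power2_eq_square)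
  finally show ?thesis .
qed

interpretation lb_prod: product_sigma_finite "\<lambda>_. lborel :: real measure"
  by standard

lemma lborel_split:
  fixes b0 :: "'a::euclidean_space" and F :: "real \<Rightarrow> real \<Rightarrow> ennreal"
  assumes b0: "b0 \<in> Basis" and F[measurable]: "case_prod F \<in> borel_measurable borel"
  shows "(\<integral>\<^sup>+x. F (x \<bullet> b0) (norm x ^ 2 - (x \<bullet> b0)^2) \<partial>lborel) =
     (\<integral>\<^sup>+y. (\<integral>\<^sup>+s. F s (\<Sum>b\<in>Basis-{b0}. (y b)^2) \<partial>lborel) \<partial>(\<Pi>\<^sub>M b\<in>Basis-{b0}. lborel))"
proof -
  let ?B = "Basis - {b0} :: 'a set"
  have BB: "Basis = insert b0 ?B" using b0 by auto
  have Fm[measurable]: "(\<lambda>(a, b). F a b) \<in> borel_measurable (borel \<Otimes>\<^sub>M borel)"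
    using F by (simp add: borel_prod)
  have mX[measurable]: "(\<lambda>f. \<Sum>b\<in>Basis. f b *\<^sub>R b) \<in> borel_measurable (\<Pi>\<^sub>M b\<in>Basis. (lborel::real measure))"
    by measurable
  have "(\<integral>\<^sup>+x. F (x \<bullet> b0) (norm x ^ 2 - (x \<bullet> b0)^2) \<partial>lborel) =
     (\<integral>\<^sup>+f. F ((\<Sum>b\<in>Basis. f b *\<^sub>R b) \<bullet> b0) (norm (\<Sum>b\<in>Basis. f b *\<^sub>R b) ^ 2 - ((\<Sum>b\<in>Basis. f b *\<^sub>R b) \<bullet> b0)^2) \<partial>(\<Pi>\<^sub>M b\<in>Basis. lborel))"
    by (subst lborel_eq) (simp add: nn_integral_distr)
  also have "\<dots> = (\<integral>\<^sup>+f. F (f b0) ((\<Sum>b\<in>Basis. (f b)^2) - (f b0)^2) \<partial>(\<Pi>\<^sub>M b\<in>Basis. lborel))"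
    using b0 by (simp add: inner_sum_Basis norm_sum_Basis)
  also have "\<dots> = (\<integral>\<^sup>+f. F (f b0) ((\<Sum>b\<in>Basis. (f b)^2) - (f b0)^2) \<partial>(\<Pi>\<^sub>M b\<in>insert b0 ?B. lborel))"
    using BB by simp
  also have "\<dots> = (\<integral>\<^sup>+y. (\<integral>\<^sup>+s. F ((y(b0:=s)) b0) ((\<Sum>b\<in>Basis. ((y(b0:=s)) b)^2) - ((y(b0:=s)) b0)^2) \<partial>lborel) \<partial>(\<Pi>\<^sub>M b\<in>?B. lborel))"
    by (rule lb_prod.product_nn_integral_insert) (auto simp: BB[symmetric])
  also have "\<dots> = (\<integral>\<^sup>+y. (\<integral>\<^sup>+s. F s (\<Sum>b\<in>?B. (y b)^2) \<partial>lborel) \<partial>(\<Pi>\<^sub>M b\<in>?B. lborel))"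
  proof -
    have eq: "(\<Sum>b\<in>Basis. ((y(b0:=s)) b)^2) = s^2 + (\<Sum>b\<in>?B. (y b)^2)" for y s
      using b0 by (auto simp add: sum.remove[OF finite_Basis b0] intro!: sum.cong)
    show ?thesis by (simp only: eq fun_upd_same) simp
  qed
  finally show ?thesis .
qed

lemma AE_q_pos:
  fixes b0 :: "'a::euclidean_space"
  assumes b0: "b0 \<in> Basis" and dim: "DIM('a) \<ge> 2"
  shows "AE y in (\<Pi>\<^sub>M b\<in>Basis-{b0}. (lborel::real measure)). 0 < (\<Sum>b\<in>Basis-{b0}. (y b)^2)"
proof -
  let ?B = "Basis - {b0} :: 'a set"
  have "?B \<noteq> {}"
  proof
    assume "?B = {}"
    then have "Basis = {b0}" using b0 by auto
    then have "card (Basis::'a set) = card {b0}" by (simp only:)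
    then show False using dim by simp
  qed
  then obtain b1 where b1: "b1 \<in> ?B" by auto
  let ?I = "?B - {b1}"
  have BB: "?B = insert b1 ?I" using b1 by auto
  have "(\<integral>\<^sup>+y. indicator {0::real} (y b1) \<partial>(\<Pi>\<^sub>M b\<in>?B. (lborel::real measure))) =
        (\<integral>\<^sup>+y. indicator {0::real} (y b1) \<partial>(\<Pi>\<^sub>M b\<in>insert b1 ?I. (lborel::real measure)))"
    using BB by simp
  also have "\<dots> = (\<integral>\<^sup>+x. (\<integral>\<^sup>+t. indicator {0::real} ((x(b1 := t)) b1) \<partial>lborel) \<partial>(\<Pi>\<^sub>M b\<in>?I. (lborel::real measure)))"
    by (rule lb_prod.product_nn_integral_insert) (auto intro!: measurable_compose[OF measurable_component_singleton])
  also have "\<dots> = (\<integral>\<^sup>+x. (\<integral>\<^sup>+t. (indicator {0::real} t :: ennreal) \<partial>lborel) \<partial>(\<Pi>\<^sub>M b\<in>?I. (lborel::real measure)))"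
    by simp
  also have "\<dots> = (0::ennreal)" by simp
  finally have "AE y in (\<Pi>\<^sub>M b\<in>?B. (lborel::real measure)). indicator {0::real} (y b1) = (0::ennreal)"
    using b1 by (subst nn_integral_0_iff_AE[symmetric]) (auto intro!: measurable_compose[OF measurable_component_singleton])
  then show ?thesis
  proof (rule AE_mp, intro AE_I2 impI)
    fix y assume "indicator {0::real} (y b1) = (0::ennreal)"
    then have "y b1 \<noteq> 0" by (auto simp: indicator_def split: if_splits)
    then have "0 < (y b1)^2" by simp
    also have "(y b1)^2 \<le> (\<Sum>b\<in>?B. (y b)^2)"
      using b1 by (intro member_le_sum) auto
    finally show "0 < (\<Sum>b\<in>?B. (y b)^2)" .
  qed
qed

lemma deriv_phi:
  fixes \<rho> u :: real
  assumes u1: "0 < 1 - u^2"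
  shows "((\<lambda>u. \<rho> * u / sqrt (1 - u^2)) has_real_derivative \<rho> / sqrt (1 - u^2) ^ 3) (at u)"
proof -
  define S where "S = sqrt (1 - u^2)"
  have s: "S > 0" using u1 by (simp add: S_def)
  have ss: "S^2 = 1 - u^2" using u1 by (simp add: S_def)
  have eq: "(\<rho> * S + \<rho> * u * (inverse S * u)) / (1 - u^2) = \<rho> / S ^ 3"
  proof -
    have "\<rho> * S + \<rho> * u * (inverse S * u) = \<rho> * (S^2 + u^2) / S"
      using s by (simp add: field_simps power2_eq_square)
    also have "\<dots> = \<rho> / S" using ss by simp
    finally show ?thesis unfolding ss[symmetric] using s by (simp add: field_simps power2_eq_square power3_eq_cube)
  qed
  show ?thesis
    using u1 eq unfolding S_def by (auto intro!: derivative_eq_intros)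
qed
lemma subst_inner:
  fixes g :: "real \<Rightarrow> ennreal" and r :: real
  assumes g[measurable]: "g \<in> borel_measurable borel" and r: "0 < r"
  shows "(\<integral>\<^sup>+s. indicator {s. s^2 + r < 1} s * g (s / sqrt (s^2 + r)) \<partial>lborel) =
         (\<integral>\<^sup>+u. indicator {u. r < 1 - u^2} u * g u * ennreal (sqrt r / sqrt (1 - u^2) ^ 3) \<partial>lborel)"
proof (cases "r < 1")
  case False
  have "indicator {s. s^2 + r < 1} s = (0::ennreal)" for s
  proof -
    have "0 \<le> s^2" by simp
    then have "\<not> s^2 + r < 1" using False by linarith
    then show ?thesis by (simp add: indicator_def)
  qed
  moreover have "indicator {u. r < 1 - u^2} u = (0::ennreal)" for u
  proof -
    have "0 \<le> u^2" by simp
    then have "\<not> r < 1 - u^2" using False by linarith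
    then show ?thesis by (simp add: indicator_def)
  qed
  ultimately show ?thesis by simp
next
  case True
  have r1: "r < 1" using True .
  define c where "c = sqrt (1 - r)"
  define \<rho> where "\<rho> = sqrt r"
  have c: "0 < c" "c < 1" using True r by (auto simp: c_def)
  have \<rho>: "0 < \<rho>" "\<rho>^2 = r" using r by (auto simp: \<rho>_def)
  define \<phi> where "\<phi> = (\<lambda>u. \<rho> * u / sqrt (1 - u^2))"
  define \<phi>' where "\<phi>' = (\<lambda>u. \<rho> / sqrt (1 - u^2) ^ 3)"
  have uc: "u^2 < 1" if "u \<in> {-c..c}" for u
  proof -
    have "\<bar>u\<bar> \<le> c" using that by auto
    then have "\<bar>u\<bar>^2 \<le> c^2" by (intro power_mono) auto
    moreover have "c^2 < 1^2" using c by (intro power_strict_mono) auto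
    ultimately show ?thesis by simp
  qed
  have der: "(\<phi> has_real_derivative \<phi>' u) (at u)" if "u \<in> {-c..c}" for u
    unfolding \<phi>_def \<phi>'_def using uc[OF that] by (intro deriv_phi) simp
  have cont: "continuous_on {-c..c} \<phi>'"
    unfolding \<phi>'_def by (intro continuous_intros) (use uc in force)+
  have nn: "\<phi>' u \<ge> 0" if "u \<in> {-c..c}" for u
    unfolding \<phi>'_def using \<rho> uc[OF that] by (intro divide_nonneg_pos) auto
  have phic: "\<phi> c = c" "\<phi> (-c) = -c"
  proof -
    have "sqrt (1 - c^2) = \<rho>" using True r by (simp add: c_def \<rho>_def)
    then show "\<phi> c = c" "\<phi> (-c) = -c" using \<rho> by (auto simp: \<phi>_def)
  qed
  define f where "f = (\<lambda>s. indicator {s. s^2 + r < 1} s * g (s / sqrt (s^2 + r)) :: ennreal)"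
  have [measurable]: "f \<in> borel_measurable borel" unfolding f_def by measurable
  have "(\<integral>\<^sup>+s. f s \<partial>lborel) = (\<integral>\<^sup>+s. f s * indicator {\<phi> (-c)..\<phi> c} s \<partial>lborel)"
  proof (intro nn_integral_cong)
    fix s
    show "f s = f s * indicator {\<phi> (-c)..\<phi> c} s"
    proof (cases "s^2 + r < 1")
      case True
      then have "s^2 < c^2" using r r1 by (simp add: c_def)
      then have "\<bar>s\<bar> < c" using c by (metis abs_of_pos power2_abs power_less_imp_less_base abs_ge_zero)
      then show ?thesis using phic by (auto simp: indicator_def)
    qed (simp add: f_def)
  qed
  also have "\<dots> = (\<integral>\<^sup>+u. f (\<phi> u) * \<phi>' u * indicator {-c..c} u \<partial>lborel)"
  proof (rule nn_integral_substitution_aux)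
    show "f \<in> borel_measurable borel" by measurable
  qed (use der cont nn c in auto)
  also have "\<dots> = (\<integral>\<^sup>+u. indicator {u. r < 1 - u^2} u * g u * ennreal (sqrt r / sqrt (1 - u^2) ^ 3) \<partial>lborel)"
  proof (intro nn_integral_cong)
    fix u
    show "f (\<phi> u) * \<phi>' u * indicator {-c..c} u = indicator {u. r < 1 - u^2} u * g u * ennreal (sqrt r / sqrt (1 - u^2) ^ 3)"
    proof (cases "u \<in> {-c..c}")
      case False
      have "c < \<bar>u\<bar>" using False by auto
      then have "c^2 < \<bar>u\<bar>^2" using c by (intro power_strict_mono) auto
      moreover have "c^2 = 1 - r" using r1 by (simp add: c_def)
      ultimately have "\<not> r < 1 - u^2" by simp
      then show ?thesis using False by (simp add: indicator_def)
    next
      case uin: True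
      have u1: "0 < 1 - u^2" using uc[OF uin] by simp
      have s: "sqrt (1 - u^2) > 0" using u1 by simp
      have ss: "sqrt (1 - u^2)^2 = 1 - u^2" using u1 by simp
      have e1: "(\<phi> u)^2 + r = r / (1 - u^2)"
        unfolding \<phi>_def using u1 s ss \<rho> by (simp add: field_simps power2_eq_square)
      have e2: "sqrt ((\<phi> u)^2 + r) = \<rho> / sqrt (1 - u^2)"
        unfolding e1 \<rho>_def by (simp add: real_sqrt_divide)
      have e3: "\<phi> u / sqrt ((\<phi> u)^2 + r) = u"
        unfolding e2 using s \<rho> by (simp add: \<phi>_def field_simps)
      have e4: "((\<phi> u)^2 + r < 1) = (r < 1 - u^2)"
        unfolding e1 using u1 by (simp add: divide_less_eq)
      have "f (\<phi> u) = indicator {u. r < 1 - u^2} u * g u"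
        by (simp add: f_def e3 e4 indicator_def)
      moreover have "\<phi>' u = sqrt r / sqrt (1 - u^2) ^ 3" by (simp add: \<phi>'_def \<rho>_def)
      ultimately show ?thesis using uin nn[OF uin] by (simp add: mult_ac)
    qed
  qed
  finally show ?thesis unfolding f_def .
qed

lemma q_meas[measurable]:
  "(\<lambda>y. \<Sum>b\<in>B. (y b)^2 :: real) \<in> borel_measurable (Pi\<^sub>M B (\<lambda>_. (lborel::real measure)))"
  by (rule borel_measurable_sum) (auto intro!: measurable_compose[OF measurable_component_singleton])

lemma nn_integral_lborel_scale:
  fixes h :: "'a::euclidean_space \<Rightarrow> ennreal"
  assumes h[measurable]: "h \<in> borel_measurable borel" and R: "0 < R"
  shows "(\<integral>\<^sup>+x. h x \<partial>lborel) = ennreal (R ^ DIM('a)) * (\<integral>\<^sup>+z. h (R *\<^sub>R z) \<partial>lborel)"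
proof -
  have "(\<integral>\<^sup>+x. h x \<partial>lborel) =
     (\<integral>\<^sup>+x. h x \<partial>(density (distr lborel borel (\<lambda>x. 0 + R *\<^sub>R x)) (\<lambda>_. \<bar>R\<bar>^DIM('a))))"
    using lborel_affine[of R "0::'a"] R by simp
  also have "\<dots> = (\<integral>\<^sup>+z. ennreal (R ^ DIM('a)) * h (R *\<^sub>R z) \<partial>lborel)"
    using R by (simp add: nn_integral_density nn_integral_distr ennreal_power)
  also have "\<dots> = ennreal (R ^ DIM('a)) * (\<integral>\<^sup>+z. h (R *\<^sub>R z) \<partial>lborel)"
    by (rule nn_integral_cmult) measurable
  finally show ?thesis .
qed

definition Aq :: "'a::euclidean_space \<Rightarrow> real \<Rightarrow> ennreal" where
  "Aq b0 t = (\<integral>\<^sup>+y. ennreal (sqrt (\<Sum>b\<in>Basis-{b0}. (y b)^2)) * indicator {..<t} (\<Sum>b\<in>Basis-{b0}. (y b)^2)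
      \<partial>(\<Pi>\<^sub>M b\<in>Basis-{b0}. (lborel::real measure)))"

lemma Aq_as_lborel:
  fixes b0 :: "'a::euclidean_space"
  assumes b0: "b0 \<in> Basis"
  shows "Aq b0 t = (\<integral>\<^sup>+x. (if 0 \<le> x \<bullet> b0 \<and> (x \<bullet> b0) \<le> sqrt (norm x ^ 2 - (x \<bullet> b0)^2) \<and> norm x ^ 2 - (x \<bullet> b0)^2 < t then 1 else 0) \<partial>lborel)"
proof -
  define F where "F = (\<lambda>s r. if 0 \<le> s \<and> s \<le> sqrt r \<and> r < t then 1 else (0::ennreal))"
  have "case_prod F \<in> borel_measurable (borel \<Otimes>\<^sub>M borel)" unfolding F_def by measurable
  then have [measurable]: "case_prod F \<in> borel_measurable borel" by (simp add: borel_prod)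
  have inner: "(\<integral>\<^sup>+s. F s r \<partial>lborel) = ennreal (sqrt r) * indicator {..<t} r" if "0 \<le> r" for r
  proof -
    have "(\<integral>\<^sup>+s. F s r \<partial>lborel) = (\<integral>\<^sup>+s. indicator {0..sqrt r} s * indicator {..<t} r \<partial>lborel)"
      by (intro nn_integral_cong) (auto simp: F_def indicator_def)
    also have "\<dots> = emeasure lborel {0..sqrt r} * indicator {..<t} r"
      by (simp add: nn_integral_multc)
    also have "\<dots> = ennreal (sqrt r) * indicator {..<t} r"
      using that by simp
    finally show ?thesis .
  qed
  have "Aq b0 t = (\<integral>\<^sup>+y. (\<integral>\<^sup>+s. F s (\<Sum>b\<in>Basis-{b0}. (y b)^2) \<partial>lborel) \<partial>(\<Pi>\<^sub>M b\<in>Basis-{b0}. lborel))"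
    unfolding Aq_def by (intro nn_integral_cong) (simp add: inner sum_nonneg)
  also have "\<dots> = (\<integral>\<^sup>+x. F (x \<bullet> b0) (norm x ^ 2 - (x \<bullet> b0)^2) \<partial>lborel)"
    by (rule lborel_split[symmetric, OF b0]) measurable
  finally show ?thesis unfolding F_def .
qed

lemma Aq_scale:
  fixes b0 :: "'a::euclidean_space"
  assumes b0: "b0 \<in> Basis" and t: "0 < t"
  shows "Aq b0 t = ennreal (t powr (real DIM('a) / 2)) * Aq b0 1"
proof -
  define R where "R = sqrt t"
  have R: "0 < R" "R^2 = t" using t by (auto simp: R_def)
  define H where "H = (\<lambda>t x. (if 0 \<le> x \<bullet> b0 \<and> (x \<bullet> b0) \<le> sqrt (norm x ^ 2 - (x \<bullet> b0)^2) \<and> norm x ^ 2 - (x \<bullet> b0)^2 < t then 1 else (0::ennreal)))"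
  have [measurable]: "H t \<in> borel_measurable borel" for t unfolding H_def by measurable
  have HR: "H t (R *\<^sub>R z) = H 1 z" for z
  proof -
    have "\<bar>z \<bullet> b0\<bar>^2 \<le> (norm z)^2"
      using Basis_le_norm[OF b0, of z] by (intro power_mono) auto
    then have nn: "0 \<le> norm z ^ 2 - (z \<bullet> b0)^2" by simp
    have e1: "norm (R *\<^sub>R z) ^ 2 - ((R *\<^sub>R z) \<bullet> b0)^2 = R^2 * (norm z ^ 2 - (z \<bullet> b0)^2)"
      using R by (simp add: power_mult_distrib algebra_simps)
    have e2: "sqrt (R^2 * (norm z ^ 2 - (z \<bullet> b0)^2)) = R * sqrt (norm z ^ 2 - (z \<bullet> b0)^2)"
      using R(1) by (simp only: real_sqrt_mult real_sqrt_abs abs_of_pos)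
    have tt: "\<And>X. t * X < t \<longleftrightarrow> X < 1" using t
      by (metis mult.right_neutral mult_less_cancel_left_pos)
    show ?thesis unfolding H_def e1 e2 using R
      by (simp add: zero_le_mult_iff mult_le_cancel_left_pos tt)
  qed
  have "Aq b0 t = (\<integral>\<^sup>+x. H t x \<partial>lborel)" unfolding H_def by (rule Aq_as_lborel[OF b0])
  also have "\<dots> = ennreal (R ^ DIM('a)) * (\<integral>\<^sup>+z. H t (R *\<^sub>R z) \<partial>lborel)"
    by (rule nn_integral_lborel_scale) (use R in auto)
  also have "\<dots> = ennreal (R ^ DIM('a)) * Aq b0 1"
    unfolding HR by (simp only: Aq_as_lborel[OF b0, of 1] H_def)
  also have "R ^ DIM('a) = t powr (real DIM('a) / 2)"
    using t by (simp add: R_def powr_half_sqrt[symmetric] powr_powr powr_realpow[symmetric])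
  finally show ?thesis .
qed

lemma powr_combine:
  fixes X :: real and d :: real
  assumes X: "0 < X"
  shows "ennreal (1 / sqrt X ^ 3) * ennreal (X powr (d / 2)) = ennreal (X powr ((d - 3) / 2))"
proof -
  have "sqrt X ^ 3 = X powr (3/2)"
    using X by (simp add: powr_half_sqrt[symmetric] powr_powr powr_realpow[symmetric])
  then have "1 / sqrt X ^ 3 * X powr (d / 2) = X powr ((d - 3) / 2)"
    using X by (simp add: powr_diff[symmetric] diff_divide_distrib)
  then show ?thesis using X by (simp add: ennreal_mult''[symmetric])
qed

lemma ennreal_div_split: "0 \<le> a \<Longrightarrow> ennreal (a / c) = ennreal a * ennreal (1 / c)"
  by (simp add: ennreal_mult'[symmetric])

lemma Phi_formula:
  fixes b0 :: "'a::euclidean_space" and g :: "real \<Rightarrow> ennreal"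
  assumes b0: "b0 \<in> Basis" and dim: "DIM('a) \<ge> 2" and g[measurable]: "g \<in> borel_measurable borel"
  shows "(\<integral>\<^sup>+x. indicator (ball 0 1 - {0}) x * g ((x \<bullet> b0) / norm x) \<partial>lborel) =
         Aq b0 1 * (\<integral>\<^sup>+u. indicator {-1<..<1} u * g u * ennreal ((1 - u^2) powr ((real DIM('a) - 3) / 2)) \<partial>lborel)"
proof -
  let ?Y = "Pi\<^sub>M (Basis-{b0}) (\<lambda>_. lborel::real measure)"
  let ?q = "\<lambda>y::'a \<Rightarrow> real. \<Sum>b\<in>Basis-{b0}. (y b)^2"
  interpret Ysf: sigma_finite_measure ?Y by (rule lb_prod.sigma_finite) simp
  interpret pair_sigma_finite lborel ?Y ..
  define F where "F = (\<lambda>s r. if 0 < s^2 + r \<and> s^2 + r < 1 then g (s / sqrt (s^2 + r)) else (0::ennreal))"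
  have "case_prod F \<in> borel_measurable (borel \<Otimes>\<^sub>M borel)" unfolding F_def by measurable
  then have [measurable]: "case_prod F \<in> borel_measurable borel" by (simp add: borel_prod)
  have "(\<integral>\<^sup>+x. indicator (ball 0 1 - {0}) x * g ((x \<bullet> b0) / norm x) \<partial>lborel) =
        (\<integral>\<^sup>+x. F (x \<bullet> b0) (norm x ^ 2 - (x \<bullet> b0)^2) \<partial>lborel)"
  proof (intro nn_integral_cong)
    fix x :: 'a
    have e: "(x \<bullet> b0)^2 + (norm x ^ 2 - (x \<bullet> b0)^2) = norm x ^ 2" by simp
    have "x \<in> ball 0 1 - {0} \<longleftrightarrow> 0 < norm x ^ 2 \<and> norm x ^ 2 < 1"
      by (auto simp: power_less_one_iff)
    then show "indicator (ball 0 1 - {0}) x * g ((x \<bullet> b0) / norm x) = F (x \<bullet> b0) (norm x ^ 2 - (x \<bullet> b0)^2)"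
      unfolding F_def e by (simp add: indicator_def)
  qed
  also have "\<dots> = (\<integral>\<^sup>+y. (\<integral>\<^sup>+s. F s (?q y) \<partial>lborel) \<partial>?Y)"
    by (rule lborel_split[OF b0]) measurable
  also have "\<dots> = (\<integral>\<^sup>+y. (\<integral>\<^sup>+u. (if ?q y < 1 - u^2 then g u * ennreal (sqrt (?q y) / sqrt (1 - u^2) ^ 3) else 0) \<partial>lborel) \<partial>?Y)"
  proof (rule nn_integral_cong_AE)
    show "AE y in ?Y. (\<integral>\<^sup>+s. F s (?q y) \<partial>lborel) =
        (\<integral>\<^sup>+u. (if ?q y < 1 - u^2 then g u * ennreal (sqrt (?q y) / sqrt (1 - u^2) ^ 3) else 0) \<partial>lborel)"
      using AE_q_pos[OF b0 dim]
    proof (rule AE_mp, intro AE_I2 impI)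
      fix y assume q: "0 < ?q y"
      have "F s (?q y) = indicator {s. s^2 + ?q y < 1} s * g (s / sqrt (s^2 + ?q y))" for s
      proof -
        have "0 < s^2 + ?q y" using q by (simp add: add_nonneg_pos)
        then show ?thesis by (simp add: F_def indicator_def)
      qed
      then have "(\<integral>\<^sup>+s. F s (?q y) \<partial>lborel) = (\<integral>\<^sup>+s. indicator {s. s^2 + ?q y < 1} s * g (s / sqrt (s^2 + ?q y)) \<partial>lborel)"
        by simp
      also have "\<dots> = (\<integral>\<^sup>+u. indicator {u. ?q y < 1 - u^2} u * g u * ennreal (sqrt (?q y) / sqrt (1 - u^2) ^ 3) \<partial>lborel)"
        by (rule subst_inner[OF g q])
      also have "\<dots> = (\<integral>\<^sup>+u. (if ?q y < 1 - u^2 then g u * ennreal (sqrt (?q y) / sqrt (1 - u^2) ^ 3) else 0) \<partial>lborel)"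
        by (intro nn_integral_cong) (simp add: indicator_def)
      finally show "(\<integral>\<^sup>+s. F s (?q y) \<partial>lborel) =
        (\<integral>\<^sup>+u. (if ?q y < 1 - u^2 then g u * ennreal (sqrt (?q y) / sqrt (1 - u^2) ^ 3) else 0) \<partial>lborel)" .
    qed
  qed
  also have "\<dots> = (\<integral>\<^sup>+u. (\<integral>\<^sup>+y. (if ?q y < 1 - u^2 then g u * ennreal (sqrt (?q y) / sqrt (1 - u^2) ^ 3) else 0) \<partial>?Y) \<partial>lborel)"
    by (rule Fubini') measurable
  also have "\<dots> = (\<integral>\<^sup>+u. indicator {-1<..<1} u * g u * ennreal ((1 - u^2) powr ((real DIM('a) - 3) / 2)) * Aq b0 1 \<partial>lborel)"
  proof (intro nn_integral_cong)
    fix u :: real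
    show "(\<integral>\<^sup>+y. (if ?q y < 1 - u^2 then g u * ennreal (sqrt (?q y) / sqrt (1 - u^2) ^ 3) else 0) \<partial>?Y) =
        indicator {-1<..<1} u * g u * ennreal ((1 - u^2) powr ((real DIM('a) - 3) / 2)) * Aq b0 1"
    proof (cases "0 < 1 - u^2")
      case False
      have "\<not> ?q y < 1 - u^2" for y
      proof -
        have "0 \<le> ?q y" by (simp add: sum_nonneg)
        then show ?thesis using False by linarith
      qed
      moreover have "u \<notin> {-1<..<1}"
        using False by (auto simp: abs_square_less_1 abs_less_iff)
      ultimately show ?thesis by simp
    next
      case True
      have uin: "u \<in> {-1<..<1}" using True by (auto simp: abs_square_less_1 abs_less_iff)
      have "(\<integral>\<^sup>+y. (if ?q y < 1 - u^2 then g u * ennreal (sqrt (?q y) / sqrt (1 - u^2) ^ 3) else 0) \<partial>?Y) =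
            (\<integral>\<^sup>+y. (g u * ennreal (1 / sqrt (1 - u^2) ^ 3)) * (ennreal (sqrt (?q y)) * indicator {..<1 - u^2} (?q y)) \<partial>?Y)"
      proof (intro nn_integral_cong)
        fix y :: "'a \<Rightarrow> real"
        have "ennreal (sqrt (?q y) / sqrt (1 - u^2) ^ 3) = ennreal (sqrt (?q y)) * ennreal (1 / sqrt (1 - u^2) ^ 3)"
          by (rule ennreal_div_split) (simp add: sum_nonneg)
        then show "(if ?q y < 1 - u^2 then g u * ennreal (sqrt (?q y) / sqrt (1 - u^2) ^ 3) else 0) =
            (g u * ennreal (1 / sqrt (1 - u^2) ^ 3)) * (ennreal (sqrt (?q y)) * indicator {..<1 - u^2} (?q y))"
          by (simp add: indicator_def mult_ac)
      qed
      also have "\<dots> = g u * ennreal (1 / sqrt (1 - u^2) ^ 3) * Aq b0 (1 - u^2)"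
        unfolding Aq_def by (rule nn_integral_cmult) measurable
      also have "\<dots> = g u * (ennreal (1 / sqrt (1 - u^2) ^ 3) * ennreal ((1 - u^2) powr (real DIM('a) / 2))) * Aq b0 1"
        using Aq_scale[OF b0 True] by (simp add: mult_ac)
      also have "\<dots> = indicator {-1<..<1} u * g u * ennreal ((1 - u^2) powr ((real DIM('a) - 3) / 2)) * Aq b0 1"
        using uin by (simp add: powr_combine[OF True])
      finally show ?thesis .
    qed
  qed
  also have "\<dots> = Aq b0 1 * (\<integral>\<^sup>+u. indicator {-1<..<1} u * g u * ennreal ((1 - u^2) powr ((real DIM('a) - 3) / 2)) \<partial>lborel)"
  proof -
    have m: "(\<lambda>u. indicator {-1<..<1} u * g u * ennreal ((1 - u^2) powr ((real DIM('a) - 3) / 2))) \<in> borel_measurable lborel"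
      by measurable
    show ?thesis by (subst nn_integral_multc[OF m]) (rule mult.commute)
  qed
  finally show ?thesis .
qed

definition Jint :: "nat \<Rightarrow> (real \<Rightarrow> ennreal) \<Rightarrow> ennreal" where
  "Jint d g = (\<integral>\<^sup>+u. indicator {-1<..<1} u * g u * ennreal ((1 - u^2) powr ((real d - 3) / 2)) \<partial>lborel)"

lemma Phi_mu:
  fixes \<mu> :: "real^'n" and g :: "real \<Rightarrow> ennreal"
  assumes \<mu>: "norm \<mu> = 1" and dim: "CARD('n) \<ge> 2" and g[measurable]: "g \<in> borel_measurable borel"
  shows "(\<integral>\<^sup>+x. indicator (ball 0 1 - {0}) x * g ((\<mu> \<bullet> x) / norm x) \<partial>lborel) =
         Aq (axis undefined 1 :: real^'n) 1 * Jint CARD('n) g"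
proof -
  define b0 where "b0 = (axis undefined 1 :: real^'n)"
  have b0: "b0 \<in> Basis" by (simp add: b0_def)
  have nb0: "norm b0 = norm \<mu>" using \<mu> by (simp add: b0_def)
  obtain Q where Q: "orthogonal_transformation Q" "Q b0 = \<mu>"
    using orthogonal_transformation_exists[OF nb0] by blast
  have [measurable]: "Q \<in> borel_measurable borel"
    using Q(1) by (intro borel_measurable_continuous_onI linear_continuous_on
        linear_conv_bounded_linear[THEN iffD1] orthogonal_transformation_linear)
  let ?G = "\<lambda>x::real^'n. indicator (ball 0 1 - {0}) x * g ((\<mu> \<bullet> x) / norm x)"
  have [measurable]: "ball 0 1 - {0} \<in> sets (borel :: (real^'n) measure)"
    by (intro sets.Diff borel_open borel_closed) auto
  have [measurable]: "(\<lambda>x::real^'n. (\<mu> \<bullet> x) / norm x) \<in> borel_measurable borel"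
    by (intro borel_measurable_divide borel_measurable_continuous_onI continuous_intros)
  have [measurable]: "?G \<in> borel_measurable borel"
    by (intro borel_measurable_times_ennreal borel_measurable_indicator measurable_compose[OF _ g]) measurable
  have "(\<integral>\<^sup>+x. ?G x \<partial>lborel) = (\<integral>\<^sup>+x. ?G x \<partial>(distr lborel borel Q))"
    by (simp add: lborel_orth[OF Q(1)])
  also have "\<dots> = (\<integral>\<^sup>+z. ?G (Q z) \<partial>lborel)"
    by (rule nn_integral_distr) measurable
  also have "\<dots> = (\<integral>\<^sup>+z. indicator (ball 0 1 - {0}) z * g ((z \<bullet> b0) / norm z) \<partial>lborel)"
  proof (intro nn_integral_cong)
    fix z
    have n: "norm (Q z) = norm z" using Q(1) by (simp add: orthogonal_transformation_norm)
    have i: "\<mu> \<bullet> Q z = z \<bullet> b0" using Q unfolding orthogonal_transformation_def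
      by (metis inner_commute)
    have "Q z = 0 \<longleftrightarrow> z = 0" using n by (metis norm_eq_zero)
    then show "?G (Q z) = indicator (ball 0 1 - {0}) z * g ((z \<bullet> b0) / norm z)"
      using n i by (simp add: indicator_def)
  qed
  also have "\<dots> = Aq b0 1 * Jint CARD('n) g"
    unfolding Jint_def using Phi_formula[OF b0 _ g] dim by simp
  finally show ?thesis by (simp add: b0_def)
qed

lemma sphere_integral:
  fixes f :: "'a::euclidean_space \<Rightarrow> ennreal"
  assumes f[measurable]: "f \<in> borel_measurable borel"
  shows "(\<integral>\<^sup>+x. f x \<partial>sphere_surface_measure) =
     ennreal (real DIM('a)) * (\<integral>\<^sup>+x. indicator (ball 0 1 - {0}) x * f (x /\<^sub>R norm x) \<partial>lborel)"
proof -
  define M where "M = restrict_space (lborel :: 'a measure) (ball 0 1 - {0})"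
  define N where "N = restrict_space (borel :: 'a measure) (sphere 0 1)"
  define T where "T = (\<lambda>x::'a. x /\<^sub>R norm x)"
  have Bs[measurable]: "ball 0 1 - {0} \<in> sets (borel :: 'a measure)"
    by (intro sets.Diff borel_open borel_closed) auto
  have Tb[measurable]: "T \<in> borel_measurable borel" unfolding T_def by measurable
  have TM: "T \<in> measurable M N"
    unfolding M_def N_def
  proof (subst measurable_restrict_space2_iff, intro conjI)
    show "T \<in> measurable (restrict_space lborel (ball 0 1 - {0})) borel"
      by (rule measurable_restrict_space1) simp
    show "T \<in> space (restrict_space lborel (ball 0 1 - {0})) \<rightarrow> sphere 0 1"
      by (auto simp: space_restrict_space T_def)
  qed
  have fN: "f \<in> borel_measurable N" unfolding N_def by (rule measurable_restrict_space1) simp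
  have "(\<integral>\<^sup>+x. f x \<partial>sphere_surface_measure) =
      (\<integral>\<^sup>+x. f x \<partial>density (distr M N T) (\<lambda>_. ennreal (real DIM('a))))"
    unfolding sphere_surface_measure_def M_def N_def T_def ..
  also have "\<dots> = (\<integral>\<^sup>+x. ennreal (real DIM('a)) * f x \<partial>distr M N T)"
    by (rule nn_integral_density) (use fN in auto)
  also have "\<dots> = (\<integral>\<^sup>+x. ennreal (real DIM('a)) * f (T x) \<partial>M)"
    by (rule nn_integral_distr[OF TM]) (use fN in auto)
  also have "\<dots> = (\<integral>\<^sup>+x. ennreal (real DIM('a)) * f (T x) * indicator (ball 0 1 - {0}) x \<partial>lborel)"
    unfolding M_def by (rule nn_integral_restrict_space) simp
  also have "\<dots> = (\<integral>\<^sup>+x. ennreal (real DIM('a)) * (indicator (ball 0 1 - {0}) x * f (T x)) \<partial>lborel)"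
    by (simp add: mult_ac)
  also have "\<dots> = ennreal (real DIM('a)) * (\<integral>\<^sup>+x. indicator (ball 0 1 - {0}) x * f (T x) \<partial>lborel)"
    by (rule nn_integral_cmult) measurable
  finally show ?thesis unfolding T_def .
qed

definition fB :: "real \<Rightarrow> real \<Rightarrow> real \<Rightarrow> real" where
  "fB a b v = v powr (a - 1) * (1 - v) powr (b - 1)"

lemma fB_nonneg: "0 \<le> fB a b v" by (simp add: fB_def)

lemma fB_pos: "0 < v \<Longrightarrow> v < 1 \<Longrightarrow> 0 < fB a b v" by (simp add: fB_def)

lemma fB_integrable:
  assumes "0 < a" "0 < b" "x \<le> 1"
  shows "fB a b integrable_on {0..x}"
proof -
  have "fB a b integrable_on {0..1}" unfolding fB_def[abs_def] using integrable_Beta'[OF assms(1,2)] by simp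
  then show ?thesis by (rule integrable_on_subinterval) (use assms in auto)
qed

lemma IB_nn:
  assumes "0 < a" "0 < b" "x \<le> 1"
  shows "ennreal (integral {0..x} (fB a b)) = (\<integral>\<^sup>+v. ennreal (fB a b v) * indicator {0..x} v \<partial>lborel)"
  by (rule nn_integral_has_integral_lebesgue'[symmetric])
     (use fB_integrable[OF assms] in \<open>auto simp: fB_nonneg\<close>)

lemma IB_1: "0 < a \<Longrightarrow> 0 < b \<Longrightarrow> integral {0..1} (fB a b) = Beta a b"
  unfolding fB_def[abs_def] using has_integral_Beta_real by (rule integral_unique)

lemma Beta_pos: "0 < a \<Longrightarrow> 0 < b \<Longrightarrow> 0 < Beta a (b::real)"
  by (simp add: Beta_def Gamma_real_pos)

lemma IB_cont: "0 < a \<Longrightarrow> 0 < b \<Longrightarrow> continuous_on {0..1} (\<lambda>x. integral {0..x} (fB a b))"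
  by (rule indefinite_integral_continuous_1) (rule fB_integrable, auto)

lemma IB_strict:
  assumes ab: "0 < a" "0 < b" and xy: "0 \<le> x" "x < y" "y \<le> 1"
  shows "integral {0..x} (fB a b) < integral {0..y} (fB a b)"
proof -
  have I: "fB a b integrable_on {0..y}" by (rule fB_integrable) (use ab xy in auto)
  have split: "integral {0..y} (fB a b) = integral {0..x} (fB a b) + integral {x..y} (fB a b)"
    by (rule Henstock_Kurzweil_Integration.integral_combine[symmetric]) (use xy I in auto)
  have Ixy: "fB a b integrable_on {x..y}" by (rule integrable_on_subinterval[OF I]) (use xy in auto)
  have nn: "ennreal (integral {x..y} (fB a b)) = (\<integral>\<^sup>+v. ennreal (fB a b v) * indicator {x..y} v \<partial>lborel)"
    by (rule nn_integral_has_integral_lebesgue'[symmetric]) (use Ixy in \<open>auto simp: fB_nonneg\<close>)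
  have ge: "0 \<le> integral {x..y} (fB a b)"
    by (rule integral_nonneg[OF Ixy]) (simp add: fB_nonneg)
  have "integral {x..y} (fB a b) \<noteq> 0"
  proof
    assume "integral {x..y} (fB a b) = 0"
    then have "(\<integral>\<^sup>+v. ennreal (fB a b v) * indicator {x..y} v \<partial>lborel) = 0" using nn by simp
    then have "AE v in lborel. ennreal (fB a b v) * indicator {x..y} v = 0"
      by (subst (asm) nn_integral_0_iff_AE) (auto simp: fB_def)
    then have "AE v in lborel. v \<notin> {x<..<y}"
    proof (rule AE_mp, intro AE_I2 impI)
      fix v assume h: "ennreal (fB a b v) * indicator {x..y} v = 0"
      show "v \<notin> {x<..<y}"
      proof
        assume v: "v \<in> {x<..<y}"
        then have "0 < fB a b v" using xy by (intro fB_pos) auto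
        then show False using h v by (auto simp: indicator_def)
      qed
    qed
    then have "emeasure lborel {x<..<y} = 0"
      by (subst (asm) AE_iff_measurable[of "{x<..<y}"]) auto
    then show False using xy by simp
  qed
  with ge split show ?thesis by simp
qed

lemma powr_identity:
  fixes v k e :: real
  assumes v: "0 < v" "v < 1"
  shows "(2 * v) powr k * (4 * v * (1 - v)) powr e = 2 powr k * 4 powr e * (v powr (k + e) * (1 - v) powr e)"
proof -
  have "(4 * v * (1 - v)) powr e = (4 * v) powr e * (1 - v) powr e"
    using v by (auto intro!: powr_mult)
  also have "(4 * v) powr e = 4 powr e * v powr e" using v by (auto intro!: powr_mult)
  finally have A: "(4 * v * (1 - v)) powr e = 4 powr e * v powr e * (1 - v) powr e" .
  have B: "(2 * v) powr k = 2 powr k * v powr k" using v by (auto intro!: powr_mult)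
  have C: "v powr (k + e) = v powr k * v powr e" by (rule powr_add)
  show ?thesis using A B C by (simp add: mult_ac)
qed

lemma J_beta:
  fixes \<kappa> t :: real and d :: nat
  assumes \<kappa>: "0 \<le> \<kappa>" and d: "2 \<le> d" and t: "-1 \<le> t" "t \<le> 1"
  shows "Jint d (\<lambda>u. ennreal (if \<kappa> = 0 then 1 else (1 + u) powr \<kappa>) * indicator {..t} u) =
    ennreal (2 * 2 powr \<kappa> * 4 powr ((real d - 3) / 2)) *
    ennreal (integral {0..(t + 1) / 2} (fB ((real d - 1) / 2 + \<kappa>) ((real d - 1) / 2)))"
proof -
  define e where "e = (real d - 3) / 2"
  define a where "a = (real d - 1) / 2 + \<kappa>"
  define b where "b = (real d - 1) / 2"
  define x where "x = (t + 1) / 2"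
  define K where "K = 2 powr \<kappa> * 4 powr e"
  have dr: "2 \<le> real d" using d by simp
  have h0: "0 < (real d - 1) / 2" using dr by simp
  have a0: "0 < a" unfolding a_def using h0 \<kappa> by (rule add_pos_nonneg)
  have b0: "0 < b" unfolding b_def using h0 .
  note ab = a0 b0
  have x: "0 \<le> x" "x \<le> 1" using t by (auto simp: x_def)
  have ae: "a - 1 = \<kappa> + e" "b - 1 = e" by (auto simp: a_def b_def e_def field_simps)
  define F where "F = (\<lambda>u. indicator {-1<..<1} u * (ennreal (if \<kappa> = 0 then 1 else (1 + u) powr \<kappa>) * indicator {..t} u) *
      ennreal ((1 - u^2) powr e))"
  have [measurable]: "F \<in> borel_measurable borel" unfolding F_def by measurable
  have "Jint d (\<lambda>u. ennreal (if \<kappa> = 0 then 1 else (1 + u) powr \<kappa>) * indicator {..t} u) = (\<integral>\<^sup>+u. F u \<partial>lborel)"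
    unfolding Jint_def F_def e_def ..
  also have "\<dots> = ennreal \<bar>2\<bar> * (\<integral>\<^sup>+v. F (-1 + 2 * v) \<partial>lborel)"
    by (rule nn_integral_real_affine) auto
  also have "(\<integral>\<^sup>+v. F (-1 + 2 * v) \<partial>lborel) = (\<integral>\<^sup>+v. ennreal K * (ennreal (fB a b v) * indicator {0..x} v) \<partial>lborel)"
  proof (rule nn_integral_cong_AE)
    have "AE v in lborel. v \<noteq> 0" by (rule AE_lborel_singleton)
    moreover have "AE v in lborel. v \<noteq> 1" by (rule AE_lborel_singleton)
    ultimately show "AE v in lborel. F (-1 + 2 * v) = ennreal K * (ennreal (fB a b v) * indicator {0..x} v)"
    proof eventually_elim
      fix v :: real assume v0: "v \<noteq> 0" and v1: "v \<noteq> 1"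
      show "F (-1 + 2 * v) = ennreal K * (ennreal (fB a b v) * indicator {0..x} v)"
      proof (cases "0 < v \<and> v < 1")
        case True
        have w: "(if \<kappa> = 0 then 1 else (1 + (-1 + 2 * v)) powr \<kappa>) = (2 * v) powr \<kappa>"
          using True by auto
        have q: "1 - (-1 + 2 * v)^2 = 4 * v * (1 - v)" by (simp add: power2_eq_square algebra_simps)
        have i1: "indicator {-1<..<1} (-1 + 2 * v) = (1::ennreal)" using True by (simp add: indicator_def)
        have i2: "indicator {..t} (-1 + 2 * v) = (indicator {0..x} v :: ennreal)"
          using True by (auto simp: indicator_def x_def)
        have "ennreal ((2 * v) powr \<kappa>) * ennreal ((4 * v * (1 - v)) powr e) = ennreal K * ennreal (fB a b v)"
          using True by (simp add: ennreal_mult''[symmetric] powr_identity K_def fB_def ae)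
        then show ?thesis unfolding F_def w q i1 i2 by (simp add: mult_ac)
      next
        case False
        then have "v < 0 \<or> 1 < v" using v0 v1 by auto
        then have "indicator {-1<..<1} (-1 + 2 * v) = (0::ennreal)" "indicator {0..x} v = (0::ennreal)"
          using x by (auto simp: indicator_def)
        then show ?thesis unfolding F_def by simp
      qed
    qed
  qed
  also have "\<dots> = ennreal K * (\<integral>\<^sup>+v. ennreal (fB a b v) * indicator {0..x} v \<partial>lborel)"
    by (rule nn_integral_cmult) (simp add: fB_def)
  also have "(\<integral>\<^sup>+v. ennreal (fB a b v) * indicator {0..x} v \<partial>lborel) = ennreal (integral {0..x} (fB a b))"
    by (rule IB_nn[symmetric]) (use ab x in auto)
  finally show ?thesis
    by (simp add: K_def a_def b_def x_def e_def ennreal_mult' mult_ac)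
qed

lemma meas_sphere:
  "f \<in> borel_measurable borel \<Longrightarrow> f \<in> borel_measurable (sphere_surface_measure :: 'a::euclidean_space measure)"
  unfolding sphere_surface_measure_def by (simp add: measurable_restrict_space1)

lemma space_sphere: "space (sphere_surface_measure :: 'a::euclidean_space measure) = sphere 0 1"
  unfolding sphere_surface_measure_def by (simp add: space_restrict_space)

lemma sets_sphere: "sets (sphere_surface_measure :: 'a::euclidean_space measure) = sets (restrict_space borel (sphere 0 1))"
  unfolding sphere_surface_measure_def by simp

lemma sphere_inner:
  fixes \<mu> :: "real^'n" and h :: "real \<Rightarrow> ennreal"
  assumes \<mu>: "norm \<mu> = 1" and dim: "CARD('n) \<ge> 2" and h[measurable]: "h \<in> borel_measurable borel"
  shows "(\<integral>\<^sup>+x. h (\<mu> \<bullet> x) \<partial>(sphere_surface_measure :: (real^'n) measure)) =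
     ennreal (real CARD('n)) * Aq (axis undefined 1 :: real^'n) 1 * Jint CARD('n) h"
proof -
  have [measurable]: "(\<lambda>x::real^'n. \<mu> \<bullet> x) \<in> borel_measurable borel"
    by (intro borel_measurable_continuous_onI continuous_intros)
  have "(\<integral>\<^sup>+x. h (\<mu> \<bullet> x) \<partial>(sphere_surface_measure :: (real^'n) measure)) =
      ennreal (real DIM(real^'n)) * (\<integral>\<^sup>+x. indicator (ball 0 1 - {0}) x * h (\<mu> \<bullet> (x /\<^sub>R norm x)) \<partial>lborel)"
    by (rule sphere_integral) measurable
  also have "(\<lambda>x::real^'n. \<mu> \<bullet> (x /\<^sub>R norm x)) = (\<lambda>x. (\<mu> \<bullet> x) / norm x)"
    by (simp add: fun_eq_iff divide_inverse mult.commute)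
  also have "(\<integral>\<^sup>+x. indicator (ball 0 1 - {0}) x * h ((\<mu> \<bullet> x) / norm x) \<partial>lborel) =
      Aq (axis undefined 1 :: real^'n) 1 * Jint CARD('n) h"
    by (rule Phi_mu[OF \<mu> dim h])
  finally show ?thesis by (simp add: mult.assoc)
qed

lemma Jint_cmult:
  assumes [measurable]: "g \<in> borel_measurable borel"
  shows "Jint d (\<lambda>u. c * g u) = c * Jint d g"
  unfolding Jint_def by (subst nn_integral_cmult[symmetric]) (measurable, simp add: mult_ac)

lemma inc_beta_IB:
  assumes ab: "0 < a" "0 < b" and x: "0 \<le> x" "x \<le> 1"
  shows "inc_beta x a b = integral {0..x} (fB a b) / Beta a b"
proof -
  have si: "set_integrable lborel {0..x} (\<lambda>u. u powr (a - 1) * (1 - u) powr (b - 1))"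
    by (rule set_integrable_subset[OF integrable_Beta[OF ab]]) (use x in auto)
  have "(LBINT u=0..x. u powr (a - 1) * (1 - u) powr (b - 1)) = integral {0..x} (\<lambda>u. u powr (a - 1) * (1 - u) powr (b - 1))"
    using interval_integral_eq_integral[OF x(1) si] by (simp add: zero_ereal_def)
  then show ?thesis unfolding inc_beta_def fB_def[abs_def] by simp
qed

lemma inc_beta_props:
  assumes ab: "0 < a" "0 < b"
  shows "continuous_on {0..1} (\<lambda>x. inc_beta x a b)"
    and "\<And>x y. 0 \<le> x \<Longrightarrow> x < y \<Longrightarrow> y \<le> 1 \<Longrightarrow> inc_beta x a b < inc_beta y a b"
    and "inc_beta 0 a b = 0" and "inc_beta 1 a b = 1"
proof -
  have B: "0 < Beta a b" by (rule Beta_pos[OF ab])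
  have "continuous_on {0..1} (\<lambda>x. integral {0..x} (fB a b) / Beta a b)"
    by (intro continuous_intros IB_cont[OF ab]) (use B in auto)
  then show "continuous_on {0..1} (\<lambda>x. inc_beta x a b)"
    by (rule continuous_on_cong[THEN iffD1, rotated 2]) (auto simp: inc_beta_IB[OF ab])
  show "inc_beta x a b < inc_beta y a b" if "0 \<le> x" "x < y" "y \<le> 1" for x y
    using IB_strict[OF ab that] B that by (simp add: inc_beta_IB[OF ab] divide_strict_right_mono)
  show "inc_beta 0 a b = 0" by (simp add: inc_beta_IB[OF ab])
  show "inc_beta 1 a b = 1" using B by (simp add: inc_beta_IB[OF ab] IB_1[OF ab])
qed

lemma inc_beta_unique:
  assumes ab: "0 < a" "0 < b" and y: "y \<in> {0..1}"
  shows "\<exists>!x. x \<in> {0..1} \<and> inc_beta x a b = y"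
proof -
  note P = inc_beta_props[OF ab]
  obtain x where x: "0 \<le> x" "x \<le> 1" "inc_beta x a b = y"
    using IVT'[of "\<lambda>x. inc_beta x a b" 0 y 1] P(1,3,4) y by auto
  show ?thesis
  proof (rule ex1I[of _ x])
    show "x \<in> {0..1} \<and> inc_beta x a b = y" using x by auto
    fix x' assume x': "x' \<in> {0..1} \<and> inc_beta x' a b = y"
    show "x' = x"
    proof (rule ccontr)
      assume "x' \<noteq> x"
      then have "x' < x \<or> x < x'" by auto
      then show False using P(2)[of x' x] P(2)[of x x'] x x' by auto
    qed
  qed
qed

theorem corollary2:
  fixes \<mu> :: "real ^ 'n" and \<kappa> :: real
  assumes "CARD('n) \<ge> 2" and "norm \<mu> = 1" and "\<kappa> \<ge> 0"
  defines "\<alpha> \<equiv> (real CARD('n) - 1) / 2 + \<kappa>"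
      and "\<beta> \<equiv> (real CARD('n) - 1) / 2"
      and "F \<equiv> (\<lambda>t. measure (power_spherical \<mu> \<kappa>)
                     {x \<in> space (power_spherical \<mu> \<kappa>). \<mu> \<bullet> x \<le> t})"
  shows "(\<forall>t \<in> {-1..1}. F t = inc_beta ((t + 1) / 2) \<alpha> \<beta>)
       \<and> (\<forall>y \<in> {0..1}.
            (\<exists>!x. x \<in> {0..1} \<and> inc_beta x \<alpha> \<beta> = y)
          \<and> (\<exists>!t. t \<in> {-1..1} \<and> F t = y)
          \<and> (THE t. t \<in> {-1..1} \<and> F t = y) = 2 * inc_beta_inv y \<alpha> \<beta> - 1)"
proof -
  note dim = assms(1) and \<mu> = assms(2) and \<kappa> = assms(3)
  define d where "d = CARD('n)"
  define w where "w = (\<lambda>u::real. if \<kappa> = 0 then 1 else (1 + u) powr \<kappa>)"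
  define C where "C = Aq (axis undefined 1 :: real^'n) 1"
  define e where "e = (real d - 3) / 2"
  define K where "K = 2 * 2 powr \<kappa> * 4 powr e"
  define IB where "IB = (\<lambda>x. integral {0..x} (fB \<alpha> \<beta>))"
  have dge: "2 \<le> d" using dim by (simp add: d_def)
  have dr: "2 \<le> real d" using dge by simp
  have h0: "0 < (real d - 1) / 2" using dr by simp
  have a0: "0 < \<alpha>" unfolding \<alpha>_def d_def[symmetric] using h0 \<kappa> by (rule add_pos_nonneg)
  have b0: "0 < \<beta>" unfolding \<beta>_def d_def[symmetric] using h0 .
  note ab = a0 b0
  have w_meas[measurable]: "w \<in> borel_measurable borel" unfolding w_def by measurable
  have w_nn: "0 \<le> w u" for u by (simp add: w_def)
  have p_eq: "ps_unnorm \<mu> \<kappa> x = w (\<mu> \<bullet> x)" for x by (simp add: ps_unnorm_def w_def)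
  have Kpos: "0 < K" by (simp add: K_def)
  have Bpos: "0 < Beta \<alpha> \<beta>" by (rule Beta_pos[OF ab])
  have Jcong: "Jint d (\<lambda>u. g u * indicator {..1} u) = Jint d g" for g
    unfolding Jint_def by (intro nn_integral_cong) (simp add: indicator_def)
  have Jt: "Jint d (\<lambda>u. ennreal (w u) * indicator {..t} u) = ennreal K * ennreal (IB ((t + 1) / 2))"
    if "-1 \<le> t" "t \<le> 1" for t
    using J_beta[OF \<kappa> dge that] unfolding w_def K_def e_def IB_def \<alpha>_def \<beta>_def d_def by simp
  have Jw: "Jint d (\<lambda>u. ennreal (w u)) = ennreal K * ennreal (Beta \<alpha> \<beta>)"
    using Jt[of 1] Jcong[of "\<lambda>u. ennreal (w u)"] IB_1[OF ab] by (simp add: IB_def)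
  have C_pos: "0 < C" and C_fin: "C < \<infinity>"
  proof -
    have Bs: "ball 0 1 - {0} \<in> sets (lborel :: (real^'n) measure)"
      by (simp add: sets.Diff borel_open borel_closed)
    have "emeasure lborel (ball 0 1 - {0::real^'n}) = emeasure lborel (ball (0::real^'n) 1)"
      by (rule emeasure_Diff_null_set) auto
    also have "\<dots> = ennreal (unit_ball_vol (real d))"
      by (simp add: emeasure_ball d_def)
    finally have V: "emeasure lborel (ball 0 1 - {0::real^'n}) = ennreal (unit_ball_vol (real d))" .
    have "(\<integral>\<^sup>+x. indicator (ball 0 1 - {0}) x * (\<lambda>_. 1::ennreal) ((\<mu> \<bullet> x) / norm x) \<partial>lborel) = C * Jint d (\<lambda>_. 1)"
      unfolding C_def d_def by (rule Phi_mu[OF \<mu> dim]) simp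
    with V Bs have CJ: "C * Jint d (\<lambda>_. 1) = ennreal (unit_ball_vol (real d))" by simp
    have "Jint d (\<lambda>u. ennreal (if (0::real) = 0 then 1 else (1 + u) powr 0) * indicator {..1} u) =
      ennreal (2 * 2 powr 0 * 4 powr ((real d - 3) / 2)) *
      ennreal (integral {0..(1 + 1) / 2} (fB ((real d - 1) / 2 + 0) ((real d - 1) / 2)))"
      by (rule J_beta[OF _ dge]) auto
    also have "integral {0..(1 + 1) / 2} (fB ((real d - 1) / 2 + 0) ((real d - 1) / 2)) = Beta ((real d - 1) / 2) ((real d - 1) / 2)"
      using IB_1[OF h0 h0] by simp
    finally have J1: "Jint d (\<lambda>_. 1) = ennreal (2 * 4 powr ((real d - 3) / 2)) * ennreal (Beta ((real d - 1) / 2) ((real d - 1) / 2))"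
      using Jcong[of "\<lambda>_. 1"] by simp
    have Bp: "0 < Beta ((real d - 1) / 2) ((real d - 1) / 2)" by (rule Beta_pos[OF h0 h0])
    have J1pos: "Jint d (\<lambda>_. 1) \<noteq> 0" unfolding J1 using Bp by simp
    have J1fin: "Jint d (\<lambda>_. 1) \<noteq> \<infinity>" unfolding J1 by (simp add: ennreal_mult_eq_top_iff)
    have Vpos: "0 < unit_ball_vol (real d)" by simp
    show "0 < C"
    proof (rule ccontr)
      assume "\<not> 0 < C"
      then have "C = 0" by simp
      then show False using CJ Vpos by simp
    qed
    show "C < \<infinity>"
    proof (rule ccontr)
      assume "\<not> C < \<infinity>"
      then have "C = \<infinity>" by (simp add: less_top[symmetric])
      then have "C * Jint d (\<lambda>_. 1) = \<infinity>" using J1pos by (simp add: ennreal_mult_eq_top_iff)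
      then show False using CJ by simp
    qed
  qed
  define c where "c = enn2real C"
  have Cc: "C = ennreal c" using C_pos C_fin by (simp add: c_def)
  have cpos: "0 < c" using C_pos C_fin by (simp add: c_def enn2real_positive_iff)
  define Z where "Z = integral\<^sup>L sphere_surface_measure (ps_unnorm \<mu> \<kappa>)"
  have p_fun: "ps_unnorm \<mu> \<kappa> = (\<lambda>x. w (\<mu> \<bullet> x))" by (simp add: fun_eq_iff p_eq)
  have inner_meas[measurable]: "(\<lambda>x::real^'n. \<mu> \<bullet> x) \<in> borel_measurable borel"
    by (intro borel_measurable_continuous_onI continuous_intros)
  have p_meas: "ps_unnorm \<mu> \<kappa> \<in> borel_measurable (sphere_surface_measure :: (real^'n) measure)"
    unfolding p_fun by (rule meas_sphere) measurable
  have nnZ: "(\<integral>\<^sup>+x. ennreal (ps_unnorm \<mu> \<kappa> x) \<partial>(sphere_surface_measure :: (real^'n) measure)) =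
      ennreal (real d) * C * Jint d (\<lambda>u. ennreal (w u))"
    unfolding p_eq d_def C_def by (rule sphere_inner[OF \<mu> dim]) measurable
  have Z: "Z = real d * c * K * Beta \<alpha> \<beta>"
  proof -
    have "Z = enn2real (\<integral>\<^sup>+x. ennreal (ps_unnorm \<mu> \<kappa> x) \<partial>(sphere_surface_measure :: (real^'n) measure))"
      unfolding Z_def by (rule integral_eq_nn_integral[OF p_meas]) (simp add: p_eq w_nn)
    also have "\<dots> = enn2real (ennreal (real d) * ennreal c * (ennreal K * ennreal (Beta \<alpha> \<beta>)))"
      unfolding nnZ Jw Cc ..
    also have "\<dots> = real d * c * K * Beta \<alpha> \<beta>"
      using cpos Kpos Bpos by (simp add: enn2real_mult)
    finally show ?thesis .
  qed
  have Zpos: "0 < Z" unfolding Z using cpos Kpos Bpos dr by simp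
  have PS: "power_spherical \<mu> \<kappa> = density sphere_surface_measure (\<lambda>x. ennreal (ps_unnorm \<mu> \<kappa> x / Z))"
    unfolding power_spherical_def Z_def ..
  have spacePS: "space (power_spherical \<mu> \<kappa>) = sphere 0 1" by (simp add: PS space_sphere)
  have Ft: "F t = inc_beta ((t + 1) / 2) \<alpha> \<beta>" if t: "-1 \<le> t" "t \<le> 1" for t
  proof -
    define x where "x = (t + 1) / 2"
    have x: "0 \<le> x" "x \<le> 1" using t by (auto simp: x_def)
    let ?A = "{x \<in> sphere (0::real^'n) 1. \<mu> \<bullet> x \<le> t}"
    have Aeq: "?A = sphere 0 1 \<inter> {x. \<mu> \<bullet> x \<le> t}" by auto
    have hs: "{x::real^'n. \<mu> \<bullet> x \<le> t} \<in> sets borel" by (rule borel_closed) (rule closed_halfspace_le)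
    have A: "?A \<in> sets (sphere_surface_measure :: (real^'n) measure)"
      unfolding sets_sphere Aeq by (subst sets_restrict_space_iff) (auto intro!: sets.Int borel_closed hs)
    have dm: "(\<lambda>x. ennreal (ps_unnorm \<mu> \<kappa> x / Z)) \<in> borel_measurable (sphere_surface_measure :: (real^'n) measure)"
      using p_meas by measurable
    have IBnn: "0 \<le> IB x" unfolding IB_def
      by (rule integral_nonneg[OF fB_integrable[OF ab x(2)]]) (simp add: fB_nonneg)
    have "emeasure (power_spherical \<mu> \<kappa>) ?A =
        (\<integral>\<^sup>+x. ennreal (ps_unnorm \<mu> \<kappa> x / Z) * indicator ?A x \<partial>(sphere_surface_measure :: (real^'n) measure))"
      unfolding PS by (rule emeasure_density[OF dm A])
    also have "\<dots> = (\<integral>\<^sup>+x. (\<lambda>u. ennreal (1 / Z) * (ennreal (w u) * indicator {..t} u)) (\<mu> \<bullet> x)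
        \<partial>(sphere_surface_measure :: (real^'n) measure))"
    proof (intro nn_integral_cong)
      fix x :: "real^'n" assume "x \<in> space sphere_surface_measure"
      then have xs: "x \<in> sphere 0 1" by (simp add: space_sphere)
      have "ennreal (ps_unnorm \<mu> \<kappa> x / Z) = ennreal (w (\<mu> \<bullet> x)) * ennreal (1 / Z)"
        unfolding p_eq by (rule ennreal_div_split) (rule w_nn)
      then show "ennreal (ps_unnorm \<mu> \<kappa> x / Z) * indicator ?A x =
          (\<lambda>u. ennreal (1 / Z) * (ennreal (w u) * indicator {..t} u)) (\<mu> \<bullet> x)"
        using xs by (simp add: indicator_def mult_ac)
    qed
    also have "\<dots> = ennreal (real d) * C * Jint d (\<lambda>u. ennreal (1 / Z) * (ennreal (w u) * indicator {..t} u))"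
      unfolding d_def C_def by (rule sphere_inner[OF \<mu> dim]) measurable
    also have "Jint d (\<lambda>u. ennreal (1 / Z) * (ennreal (w u) * indicator {..t} u)) =
        ennreal (1 / Z) * (ennreal K * ennreal (IB x))"
      by (subst Jint_cmult) (measurable, simp add: Jt[OF t] x_def)
    finally have em: "emeasure (power_spherical \<mu> \<kappa>) ?A =
        ennreal (real d) * ennreal c * (ennreal (1 / Z) * (ennreal K * ennreal (IB x)))"
      by (simp add: Cc)
    have "F t = enn2real (emeasure (power_spherical \<mu> \<kappa>) ?A)"
      unfolding F_def spacePS measure_def ..
    also have "\<dots> = real d * c * (1 / Z) * K * IB x"
      unfolding em using cpos Zpos Kpos IBnn by (simp add: enn2real_mult)
    also have "\<dots> = IB x / Beta \<alpha> \<beta>"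
      unfolding Z using cpos Kpos Bpos dr by (simp add: field_simps)
    also have "\<dots> = inc_beta x \<alpha> \<beta>"
      unfolding IB_def by (rule inc_beta_IB[OF ab x, symmetric])
    finally show ?thesis by (simp add: x_def)
  qed
  have part1: "\<forall>t \<in> {-1..1}. F t = inc_beta ((t + 1) / 2) \<alpha> \<beta>" using Ft by auto
  have part2: "(\<exists>!x. x \<in> {0..1} \<and> inc_beta x \<alpha> \<beta> = y)
          \<and> (\<exists>!t. t \<in> {-1..1} \<and> F t = y)
          \<and> (THE t. t \<in> {-1..1} \<and> F t = y) = 2 * inc_beta_inv y \<alpha> \<beta> - 1" if y: "y \<in> {0..1}" for y
  proof -
    have U: "\<exists>!x. x \<in> {0..1} \<and> inc_beta x \<alpha> \<beta> = y" by (rule inc_beta_unique[OF ab y])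
    define x0 where "x0 = inc_beta_inv y \<alpha> \<beta>"
    have x0: "x0 \<in> {0..1}" "inc_beta x0 \<alpha> \<beta> = y"
      using theI'[OF U] unfolding x0_def inc_beta_inv_def by auto
    have eqv: "t \<in> {-1..1} \<and> F t = y \<longleftrightarrow> (t + 1) / 2 \<in> {0..1} \<and> inc_beta ((t + 1) / 2) \<alpha> \<beta> = y" for t
    proof
      assume h: "t \<in> {-1..1} \<and> F t = y"
      then show "(t + 1) / 2 \<in> {0..1} \<and> inc_beta ((t + 1) / 2) \<alpha> \<beta> = y" using Ft[of t] by auto
    next
      assume h: "(t + 1) / 2 \<in> {0..1} \<and> inc_beta ((t + 1) / 2) \<alpha> \<beta> = y"
      then have "t \<in> {-1..1}" by auto
      then show "t \<in> {-1..1} \<and> F t = y" using Ft[of t] h by auto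
    qed
    have t0: "2 * x0 - 1 \<in> {-1..1} \<and> F (2 * x0 - 1) = y"
      unfolding eqv using x0 by simp
    have uniq: "t = 2 * x0 - 1" if "t \<in> {-1..1} \<and> F t = y" for t
    proof -
      have "(t + 1) / 2 \<in> {0..1} \<and> inc_beta ((t + 1) / 2) \<alpha> \<beta> = y" using that eqv by blast
      then have "(t + 1) / 2 = x0" using U x0 by blast
      then show ?thesis by simp
    qed
    have E: "\<exists>!t. t \<in> {-1..1} \<and> F t = y" using t0 uniq by blast
    have "(THE t. t \<in> {-1..1} \<and> F t = y) = 2 * x0 - 1"
      by (rule the_equality) (use t0 uniq in auto)
    with U E show ?thesis by (simp add: x0_def)
  qed
  show ?thesis using part1 part2 by blast
qed


end
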